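(* Let $K=\{k_0,k_1,\dots,k_n\}$ be a finite set of alternatives, $K_*=K\setminus\{k_0\}$, $T_1=\{t_1^a,t_1^b\}$, $T_2$ a finite set, $T=T_1\times T_2$, and $\lambda$ a probability measure on $T$ with $\lambda(t)>0$ for all $t$, equal to the product of its marginals $\lambda_1,\lambda_2$. Let real numbers $Q_i^k(t_i)$ ($k\in K_*$) be given, put $Q_i^{k_0}(t_i)=1-\sum_{k\in K_*}Q_i^k(t_i)$, $h_i^k(t_i)=Q_i^k(t_i)\lambda_i(t_i)$ for all $k\in K$, and assume $\sum_{t_1\in T_1}h_1^k(t_1)=\sum_{t_2\in T_2}h_2^k(t_2)$ for all $k\in K_*$. Let $P_{\mathcal I}$ denote the system: $x^k:T\to\mathbb{R}_{\ge 0}$ ($k\in K$) with $\sum_{t_{-i}}x^k(t)=h_i^k(t_i)$ for all $k\in K_*$, $t_i\in T_i$, $i=1,2$, and $\sum_{k\in K}x^k(t)=\lambda(t)$ for all $t\in T$. Let $P(t_1^a)$ denote the system: $x^k:T\to\mathbb{R}_{\ge0}$ ($k\in K$) with $$\sum_{t_{-i}\in T_{-i}}x^k(t)=h_i^k(t_i)\ \text{ for all }(k,t_i)\in K\times\big(T_2\cup\{t_1^b\}\big),\qquad \sum_{k\in K}x^k(t_1^a,t_2)=\lambda(t_1^a,t_2)\ \text{ for all }t_2\in T_2.$$ Then: (1) $P_{\mathcal I}$ has a feasible solution if and only if $P(t_1^a)$ has a feasible solution. (2) $P(t_1^a)$ is a network flow problem on the bipartite graph with supply nodes $V_1=K\times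 T_2$ and demand nodes $V_2=(K\times\{t_1^b\})\cup(\{t_1^a\}\times T_2)$, with an arc from each $(k,t_2)$ to $(k,t_1^b)$ (carrying flow $x^k(t_1^b,t_2)$) and an arc from each $(k,t_2)$ to $(t_1^a,t_2)$ (carrying flow $x^k(t_1^a,t_2)$), supply $h_2^k(t_2)$ at $(k,t_2)$, demand $h_1^k(t_1^b)$ at $(k,t_1^b)$ and demand $\lambda(t_1^a,t_2)$ at $(t_1^a,t_2)$: $P(t_1^a)$ has a feasible solution if and only if there is a non-negative flow on these arcs whose total outflow at each supply node equals its supply and whose total inflow at each demand node equals its demand.
   Context: Here $-i$ denotes the player other than $i$ and $t=(t_i,t_{-i})$. *)

theory Defs
  imports Complex_Main
begin

text \<open>Alternatives: a finite type 'k (the set K), with distinguished k0; K_* = UNIV - {k0}.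
  Player 1 types: the set T1 = {ta, tb} in some type 'a.  Player 2 types: a finite type 't2
  (the set T2 = UNIV).\<close>

definition marg1 :: "('a \<times> 't2::finite \<Rightarrow> real) \<Rightarrow> 'a \<Rightarrow> real" where
  "marg1 lam t1 = (\<Sum>t2\<in>UNIV. lam (t1, t2))"

definition marg2 :: "'a set \<Rightarrow> ('a \<times> 't2 \<Rightarrow> real) \<Rightarrow> 't2 \<Rightarrow> real" where
  "marg2 T1 lam t2 = (\<Sum>t1\<in>T1. lam (t1, t2))"

definition Qext :: "'k::finite \<Rightarrow> ('k \<Rightarrow> 'b \<Rightarrow> real) \<Rightarrow> 'k \<Rightarrow> 'b \<Rightarrow> real" where
  "Qext k0 Q k t = (if k = k0 then 1 - (\<Sum>k'\<in>UNIV - {k0}. Q k' t) else Q k t)"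

definition h1 :: "'k::finite \<Rightarrow> ('a \<times> 't2::finite \<Rightarrow> real) \<Rightarrow> ('k \<Rightarrow> 'a \<Rightarrow> real) \<Rightarrow> 'k \<Rightarrow> 'a \<Rightarrow> real" where
  "h1 k0 lam Q1 k t1 = Qext k0 Q1 k t1 * marg1 lam t1"

definition h2 :: "'k::finite \<Rightarrow> 'a set \<Rightarrow> ('a \<times> 't2 \<Rightarrow> real) \<Rightarrow> ('k \<Rightarrow> 't2 \<Rightarrow> real) \<Rightarrow> 'k \<Rightarrow> 't2 \<Rightarrow> real" where
  "h2 k0 T1 lam Q2 k t2 = Qext k0 Q2 k t2 * marg2 T1 lam t2"

definition PI_feasible :: "'k::finite \<Rightarrow> 'a \<Rightarrow> 'a \<Rightarrow> ('a \<times> 't2::finite \<Rightarrow> real)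
    \<Rightarrow> ('k \<Rightarrow> 'a \<Rightarrow> real) \<Rightarrow> ('k \<Rightarrow> 't2 \<Rightarrow> real) \<Rightarrow> bool" where
  "PI_feasible k0 ta tb lam Q1 Q2 \<longleftrightarrow>
    (\<exists>x :: 'k \<Rightarrow> 'a \<times> 't2 \<Rightarrow> real.
      (\<forall>k t1 t2. t1 \<in> {ta, tb} \<longrightarrow> x k (t1, t2) \<ge> 0) \<and>
      (\<forall>k. k \<noteq> k0 \<longrightarrow> (\<forall>t1\<in>{ta, tb}. (\<Sum>t2\<in>UNIV. x k (t1, t2)) = h1 k0 lam Q1 k t1)) \<and>
      (\<forall>k. k \<noteq> k0 \<longrightarrow> (\<forall>t2. (\<Sum>t1\<in>{ta, tb}. x k (t1, t2)) = h2 k0 {ta, tb} lam Q2 k t2)) \<and>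
      (\<forall>t1 t2. t1 \<in> {ta, tb} \<longrightarrow> (\<Sum>k\<in>UNIV. x k (t1, t2)) = lam (t1, t2)))"

definition Pa_feasible :: "'k::finite \<Rightarrow> 'a \<Rightarrow> 'a \<Rightarrow> ('a \<times> 't2::finite \<Rightarrow> real)
    \<Rightarrow> ('k \<Rightarrow> 'a \<Rightarrow> real) \<Rightarrow> ('k \<Rightarrow> 't2 \<Rightarrow> real) \<Rightarrow> bool" where
  "Pa_feasible k0 ta tb lam Q1 Q2 \<longleftrightarrow>
    (\<exists>x :: 'k \<Rightarrow> 'a \<times> 't2 \<Rightarrow> real.
      (\<forall>k t1 t2. t1 \<in> {ta, tb} \<longrightarrow> x k (t1, t2) \<ge> 0) \<and>
      (\<forall>k t2. (\<Sum>t1\<in>{ta, tb}. x k (t1, t2)) = h2 k0 {ta, tb} lam Q2 k t2) \<and>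
      (\<forall>k. (\<Sum>t2\<in>UNIV. x k (tb, t2)) = h1 k0 lam Q1 k tb) \<and>
      (\<forall>t2. (\<Sum>k\<in>UNIV. x k (ta, t2)) = lam (ta, t2)))"

definition feasible_flow :: "'v set \<Rightarrow> 'w set \<Rightarrow> ('v \<times> 'w) set \<Rightarrow> ('v \<Rightarrow> real) \<Rightarrow> ('w \<Rightarrow> real) \<Rightarrow> bool" where
  "feasible_flow V1 V2 A s d \<longleftrightarrow>
    (\<exists>f :: 'v \<times> 'w \<Rightarrow> real.
      (\<forall>e\<in>A. f e \<ge> 0) \<and>
      (\<forall>v\<in>V1. (\<Sum>w\<in>{w. (v, w) \<in> A}. f (v, w)) = s v) \<and>
      (\<forall>w\<in>V2. (\<Sum>v\<in>{v. (v, w) \<in> A}. f (v, w)) = d w))"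

text \<open>The specific graph: supply nodes (k,t2); demand nodes Inl k = (k,tb) and Inr t2 = (ta,t2).\<close>
definition flow_arcs :: "(('k \<times> 't2) \<times> ('k + 't2)) set" where
  "flow_arcs = {((k, t2), Inl k) | k t2. True} \<union> {((k, t2), Inr t2) | k t2. True}"

definition flow_demand :: "'k::finite \<Rightarrow> 'a \<Rightarrow> 'a \<Rightarrow> ('a \<times> 't2::finite \<Rightarrow> real)
    \<Rightarrow> ('k \<Rightarrow> 'a \<Rightarrow> real) \<Rightarrow> 'k + 't2 \<Rightarrow> real" where
  "flow_demand k0 ta tb lam Q1 w = (case w of Inl k \<Rightarrow> h1 k0 lam Q1 k tb | Inr t2 \<Rightarrow> lam (ta, t2))"

end

theory Submission
  imports Defs
begin

lemma Qext_sum: "(\<Sum>k\<in>UNIV. Qext k0 Q k t) = 1"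
proof -
  have "(\<Sum>k\<in>UNIV. Qext k0 Q k t) = Qext k0 Q k0 t + (\<Sum>k\<in>UNIV-{k0}. Qext k0 Q k t)"
    by (simp add: sum.remove)
  also have "(\<Sum>k\<in>UNIV-{k0}. Qext k0 Q k t) = (\<Sum>k\<in>UNIV-{k0}. Q k t)"
    by (rule sum.cong) (auto simp: Qext_def)
  finally show ?thesis by (simp add: Qext_def)
qed

lemma h1_sum: "(\<Sum>k\<in>UNIV. h1 k0 lam Q1 k t1) = marg1 lam t1"
  unfolding h1_def by (simp add: sum_distrib_right[symmetric] Qext_sum)

lemma h2_sum: "(\<Sum>k\<in>UNIV. h2 k0 T1 lam Q2 k t2) = marg2 T1 lam t2"
  unfolding h2_def by (simp add: sum_distrib_right[symmetric] Qext_sum)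

lemma h1_k0: "h1 k0 lam Q1 k0 t1 = marg1 lam t1 - (\<Sum>k\<in>UNIV-{k0}. h1 k0 lam Q1 k t1)"
  using h1_sum[of k0 lam Q1 t1] sum.remove[of UNIV k0 "\<lambda>k. h1 k0 lam Q1 k t1"] by simp

lemma h2_k0: "h2 k0 T1 lam Q2 k0 t2 = marg2 T1 lam t2 - (\<Sum>k\<in>UNIV-{k0}. h2 k0 T1 lam Q2 k t2)"
  using h2_sum[of k0 T1 lam Q2 t2] sum.remove[of UNIV k0 "\<lambda>k. h2 k0 T1 lam Q2 k t2"] by simp

lemma sum_k0: "(\<Sum>k\<in>UNIV. (g::'k::finite \<Rightarrow> real) k) = g k0 + (\<Sum>k\<in>UNIV-{k0}. g k)"
  by (simp add: sum.remove)

theorem lemma7: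
  fixes k0 :: "'k::finite" and ta tb :: 'a
    and lam :: "'a \<times> 't2::finite \<Rightarrow> real"
    and Q1 :: "'k \<Rightarrow> 'a \<Rightarrow> real" and Q2 :: "'k \<Rightarrow> 't2 \<Rightarrow> real"
  assumes "ta \<noteq> tb"
    and "\<And>t1 t2. t1 \<in> {ta, tb} \<Longrightarrow> lam (t1, t2) > 0"
    and "(\<Sum>t\<in>{ta, tb} \<times> UNIV. lam t) = 1"
    and "\<And>t1 t2. t1 \<in> {ta, tb} \<Longrightarrow> lam (t1, t2) = marg1 lam t1 * marg2 {ta, tb} lam t2"
    and "\<And>k. k \<noteq> k0 \<Longrightarrow>
           (\<Sum>t1\<in>{ta, tb}. h1 k0 lam Q1 k t1) = (\<Sum>t2\<in>UNIV. h2 k0 {ta, tb} lam Q2 k t2)"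
  shows "(PI_feasible k0 ta tb lam Q1 Q2 \<longleftrightarrow> Pa_feasible k0 ta tb lam Q1 Q2)
       \<and> (Pa_feasible k0 ta tb lam Q1 Q2 \<longleftrightarrow>
            feasible_flow (UNIV :: ('k \<times> 't2) set) (UNIV :: ('k + 't2) set) flow_arcs
              (\<lambda>(k, t2). h2 k0 {ta, tb} lam Q2 k t2) (flow_demand k0 ta tb lam Q1))"
proof
  note ne = assms(1)
  have S2: "\<And>g. (\<Sum>t1\<in>{ta, tb}. g t1) = g ta + (g tb :: real)" using ne by simp
  have m2: "\<And>t2. marg2 {ta, tb} lam t2 = lam (ta, t2) + lam (tb, t2)"
    by (simp add: marg2_def S2)
  have m1: "\<And>t1. marg1 lam t1 = (\<Sum>t2\<in>UNIV. lam (t1, t2))" by (simp add: marg1_def)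
  show "PI_feasible k0 ta tb lam Q1 Q2 \<longleftrightarrow> Pa_feasible k0 ta tb lam Q1 Q2"
  proof
    assume "PI_feasible k0 ta tb lam Q1 Q2"
    then obtain x :: "'k \<Rightarrow> 'a \<times> 't2 \<Rightarrow> real" where
      x0: "\<forall>k t1 t2. t1 \<in> {ta, tb} \<longrightarrow> x k (t1, t2) \<ge> 0" and
      r: "\<forall>k. k \<noteq> k0 \<longrightarrow> (\<forall>t1\<in>{ta, tb}. (\<Sum>t2\<in>UNIV. x k (t1, t2)) = h1 k0 lam Q1 k t1)" and
      c: "\<forall>k. k \<noteq> k0 \<longrightarrow> (\<forall>t2. (\<Sum>t1\<in>{ta, tb}. x k (t1, t2)) = h2 k0 {ta, tb} lam Q2 k t2)" and
      s: "\<forall>t1 t2. t1 \<in> {ta, tb} \<longrightarrow> (\<Sum>k\<in>UNIV. x k (t1, t2)) = lam (t1, t2)"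
      unfolding PI_feasible_def by (elim exE conjE)
    have c': "\<forall>k t2. (\<Sum>t1\<in>{ta, tb}. x k (t1, t2)) = h2 k0 {ta, tb} lam Q2 k t2"
    proof (intro allI)
      fix k t2
      show "(\<Sum>t1\<in>{ta, tb}. x k (t1, t2)) = h2 k0 {ta, tb} lam Q2 k t2"
      proof (cases "k = k0")
        case True
        have e: "\<And>t1. t1 \<in> {ta,tb} \<Longrightarrow> x k0 (t1, t2) = lam (t1, t2) - (\<Sum>k\<in>UNIV-{k0}. x k (t1, t2))"
          using s sum_k0[of "\<lambda>k. x k (_, t2)" k0] by (metis add_diff_cancel_right')
        have "(\<Sum>t1\<in>{ta, tb}. x k0 (t1, t2)) = (\<Sum>t1\<in>{ta, tb}. lam (t1, t2) - (\<Sum>k\<in>UNIV-{k0}. x k (t1, t2)))"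
          by (rule sum.cong) (use e in auto)
        also have "\<dots> = marg2 {ta, tb} lam t2 - (\<Sum>k\<in>UNIV-{k0}. \<Sum>t1\<in>{ta, tb}. x k (t1, t2))"
          unfolding sum_subtractf marg2_def by (simp only: sum.swap[of _ "{ta,tb}"])
        also have "\<dots> = marg2 {ta, tb} lam t2 - (\<Sum>k\<in>UNIV-{k0}. h2 k0 {ta, tb} lam Q2 k t2)"
          using c by simp
        finally show ?thesis using True h2_k0[of k0 "{ta,tb}" lam Q2 t2] by simp
      qed (use c in auto)
    qed
    have r': "\<forall>k. (\<Sum>t2\<in>UNIV. x k (tb, t2)) = h1 k0 lam Q1 k tb"
    proof (intro allI)
      fix k
      show "(\<Sum>t2\<in>UNIV. x k (tb, t2)) = h1 k0 lam Q1 k tb"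
      proof (cases "k = k0")
        case True
        have e: "\<And>t2. x k0 (tb, t2) = lam (tb, t2) - (\<Sum>k\<in>UNIV-{k0}. x k (tb, t2))"
          using s sum_k0[of "\<lambda>k. x k (tb, _)" k0] by (metis add_diff_cancel_right' insertCI)
        have "(\<Sum>t2\<in>UNIV. x k0 (tb, t2)) = (\<Sum>t2\<in>UNIV. lam (tb, t2) - (\<Sum>k\<in>UNIV-{k0}. x k (tb, t2)))"
          using e by simp
        also have "\<dots> = marg1 lam tb - (\<Sum>k\<in>UNIV-{k0}. \<Sum>t2\<in>UNIV. x k (tb, t2))"
          unfolding sum_subtractf marg1_def by (simp only: sum.swap[of _ "UNIV::'t2 set"])
        also have "\<dots> = marg1 lam tb - (\<Sum>k\<in>UNIV-{k0}. h1 k0 lam Q1 k tb)"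
          using r by simp
        finally show ?thesis using True h1_k0[of k0 lam Q1 tb] by simp
      qed (use r in auto)
    qed
    have s': "\<forall>t2. (\<Sum>k\<in>UNIV. x k (ta, t2)) = lam (ta, t2)" using s by simp
    show "Pa_feasible k0 ta tb lam Q1 Q2"
      unfolding Pa_feasible_def by (rule exI[of _ x]) (intro conjI x0 c' r' s')
  next
    assume "Pa_feasible k0 ta tb lam Q1 Q2"
    then obtain x :: "'k \<Rightarrow> 'a \<times> 't2 \<Rightarrow> real" where
      x0: "\<forall>k t1 t2. t1 \<in> {ta, tb} \<longrightarrow> x k (t1, t2) \<ge> 0" and
      c: "\<forall>k t2. (\<Sum>t1\<in>{ta, tb}. x k (t1, t2)) = h2 k0 {ta, tb} lam Q2 k t2" and
      r: "\<forall>k. (\<Sum>t2\<in>UNIV. x k (tb, t2)) = h1 k0 lam Q1 k tb" and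
      s: "\<forall>t2. (\<Sum>k\<in>UNIV. x k (ta, t2)) = lam (ta, t2)"
      unfolding Pa_feasible_def by (elim exE conjE)
    have r': "\<forall>k. k \<noteq> k0 \<longrightarrow> (\<forall>t1\<in>{ta, tb}. (\<Sum>t2\<in>UNIV. x k (t1, t2)) = h1 k0 lam Q1 k t1)"
    proof (intro allI impI ballI)
      fix k t1 assume k: "k \<noteq> k0" and t1: "t1 \<in> {ta, tb}"
      have "(\<Sum>t2\<in>UNIV. x k (ta, t2)) = (\<Sum>t2\<in>UNIV. h2 k0 {ta, tb} lam Q2 k t2) - (\<Sum>t2\<in>UNIV. x k (tb, t2))"
        using c by (simp add: S2 sum.distrib[symmetric] eq_diff_eq)
      also have "\<dots> = h1 k0 lam Q1 k ta"
        using assms(5)[OF k] r by (simp add: S2)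
      finally show "(\<Sum>t2\<in>UNIV. x k (t1, t2)) = h1 k0 lam Q1 k t1" using t1 r by auto
    qed
    have s': "\<forall>t1 t2. t1 \<in> {ta, tb} \<longrightarrow> (\<Sum>k\<in>UNIV. x k (t1, t2)) = lam (t1, t2)"
    proof (intro allI impI)
      fix t1 t2 assume t1: "t1 \<in> {ta, tb}"
      have cc: "\<And>k. x k (tb, t2) = h2 k0 {ta, tb} lam Q2 k t2 - x k (ta, t2)"
        using c by (simp add: S2 eq_diff_eq add.commute)
      have "(\<Sum>k\<in>UNIV. x k (tb, t2)) = (\<Sum>k\<in>UNIV. h2 k0 {ta, tb} lam Q2 k t2) - (\<Sum>k\<in>UNIV. x k (ta, t2))"
        by (simp only: cc sum_subtractf)
      also have "\<dots> = lam (tb, t2)" using s h2_sum[of k0 "{ta,tb}" lam Q2 t2] m2[of t2] by simp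
      finally show "(\<Sum>k\<in>UNIV. x k (t1, t2)) = lam (t1, t2)" using t1 s by auto
    qed
    have c': "\<forall>k. k \<noteq> k0 \<longrightarrow> (\<forall>t2. (\<Sum>t1\<in>{ta, tb}. x k (t1, t2)) = h2 k0 {ta, tb} lam Q2 k t2)"
      using c by simp
    show "PI_feasible k0 ta tb lam Q1 Q2"
      unfolding PI_feasible_def by (rule exI[of _ x]) (intro conjI x0 c' r' s')
  qed
next
  have S2: "\<And>g. (\<Sum>t1\<in>{ta, tb}. g t1) = g ta + (g tb :: real)" using assms(1) by simp
  have A1: "\<And>k t2. {w. ((k, t2), w) \<in> (flow_arcs :: (('k \<times> 't2) \<times> ('k + 't2)) set)} = {Inl k, Inr t2}"
    by (auto simp: flow_arcs_def)
  have A2: "\<And>k. {v. (v, Inl k) \<in> (flow_arcs :: (('k \<times> 't2) \<times> ('k + 't2)) set)} = (\<lambda>t2. (k, t2)) ` UNIV"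
    by (auto simp: flow_arcs_def)
  have A3: "\<And>t2. {v. (v, Inr t2) \<in> (flow_arcs :: (('k \<times> 't2) \<times> ('k + 't2)) set)} = (\<lambda>k. (k, t2)) ` UNIV"
    by (auto simp: flow_arcs_def)
  have I2: "\<And>k. inj (\<lambda>t2::'t2. (k::'k, t2))" by (auto simp: inj_def)
  have I3: "\<And>t2. inj (\<lambda>k::'k. (k, t2::'t2))" by (auto simp: inj_def)
  show "Pa_feasible k0 ta tb lam Q1 Q2 \<longleftrightarrow>
            feasible_flow (UNIV :: ('k \<times> 't2) set) (UNIV :: ('k + 't2) set) flow_arcs
              (\<lambda>(k, t2). h2 k0 {ta, tb} lam Q2 k t2) (flow_demand k0 ta tb lam Q1)"
  proof
    assume "Pa_feasible k0 ta tb lam Q1 Q2"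
    then obtain x :: "'k \<Rightarrow> 'a \<times> 't2 \<Rightarrow> real" where
      x0: "\<forall>k t1 t2. t1 \<in> {ta, tb} \<longrightarrow> x k (t1, t2) \<ge> 0" and
      c: "\<forall>k t2. (\<Sum>t1\<in>{ta, tb}. x k (t1, t2)) = h2 k0 {ta, tb} lam Q2 k t2" and
      r: "\<forall>k. (\<Sum>t2\<in>UNIV. x k (tb, t2)) = h1 k0 lam Q1 k tb" and
      s: "\<forall>t2. (\<Sum>k\<in>UNIV. x k (ta, t2)) = lam (ta, t2)"
      unfolding Pa_feasible_def by (elim exE conjE)
    define f :: "('k \<times> 't2) \<times> ('k + 't2) \<Rightarrow> real" where
      "f = (\<lambda>((k, t2), w). case w of Inl _ \<Rightarrow> x k (tb, t2) | Inr _ \<Rightarrow> x k (ta, t2))"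
    have F1: "(\<forall>e\<in>flow_arcs. f e \<ge> 0)"
      using x0 by (auto simp: f_def split: sum.splits)
    have F2: "\<forall>v\<in>UNIV. (\<Sum>w\<in>{w. (v, w) \<in> flow_arcs}. f (v, w)) = (\<lambda>(k, t2). h2 k0 {ta, tb} lam Q2 k t2) v"
      using c by (auto simp: A1 f_def S2 add.commute)
    have F3: "\<forall>w\<in>UNIV. (\<Sum>v\<in>{v. (v, w) \<in> flow_arcs}. f (v, w)) = flow_demand k0 ta tb lam Q1 w"
    proof
      fix w :: "'k + 't2"
      show "(\<Sum>v\<in>{v. (v, w) \<in> flow_arcs}. f (v, w)) = flow_demand k0 ta tb lam Q1 w"
        by (cases w) (use r s in \<open>simp_all add: A2 A3 sum.reindex I2 I3 f_def flow_demand_def\<close>)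
    qed
    show "feasible_flow (UNIV :: ('k \<times> 't2) set) (UNIV :: ('k + 't2) set) flow_arcs
              (\<lambda>(k, t2). h2 k0 {ta, tb} lam Q2 k t2) (flow_demand k0 ta tb lam Q1)"
      unfolding feasible_flow_def by (rule exI[of _ f]) (intro conjI F1 F2 F3)
  next
    assume "feasible_flow (UNIV :: ('k \<times> 't2) set) (UNIV :: ('k + 't2) set) flow_arcs
              (\<lambda>(k, t2). h2 k0 {ta, tb} lam Q2 k t2) (flow_demand k0 ta tb lam Q1)"
    then obtain f :: "('k \<times> 't2) \<times> ('k + 't2) \<Rightarrow> real" where
      f0: "\<forall>e\<in>flow_arcs. f e \<ge> 0" and
      fs: "\<forall>v\<in>UNIV. (\<Sum>w\<in>{w. (v, w) \<in> flow_arcs}. f (v, w)) = (\<lambda>(k, t2). h2 k0 {ta, tb} lam Q2 k t2) v" and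
      fd: "\<forall>w\<in>UNIV. (\<Sum>v\<in>{v. (v, w) \<in> flow_arcs}. f (v, w)) = flow_demand k0 ta tb lam Q1 w"
      unfolding feasible_flow_def by (elim exE conjE)
    define x :: "'k \<Rightarrow> 'a \<times> 't2 \<Rightarrow> real" where
      "x = (\<lambda>k (t1, t2). if t1 = ta then f ((k, t2), Inr t2) else f ((k, t2), Inl k))"
    have G1: "\<forall>k t1 t2. t1 \<in> {ta, tb} \<longrightarrow> x k (t1, t2) \<ge> 0"
      using f0 by (auto simp: x_def flow_arcs_def)
    have G2: "\<forall>k t2. (\<Sum>t1\<in>{ta, tb}. x k (t1, t2)) = h2 k0 {ta, tb} lam Q2 k t2"
    proof (intro allI)
      fix k t2
      show "(\<Sum>t1\<in>{ta, tb}. x k (t1, t2)) = h2 k0 {ta, tb} lam Q2 k t2"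
        using fs[rule_format, of "(k, t2)"] assms(1) by (simp add: A1 x_def S2 add.commute)
    qed
    have G3: "\<forall>k. (\<Sum>t2\<in>UNIV. x k (tb, t2)) = h1 k0 lam Q1 k tb"
    proof
      fix k
      show "(\<Sum>t2\<in>UNIV. x k (tb, t2)) = h1 k0 lam Q1 k tb"
        using fd[rule_format, of "Inl k"] assms(1)
        by (simp add: A2 sum.reindex I2 x_def flow_demand_def)
    qed
    have G4: "\<forall>t2. (\<Sum>k\<in>UNIV. x k (ta, t2)) = lam (ta, t2)"
    proof
      fix t2
      show "(\<Sum>k\<in>UNIV. x k (ta, t2)) = lam (ta, t2)"
        using fd[rule_format, of "Inr t2"]
        by (simp add: A3 sum.reindex I3 x_def flow_demand_def)
    qed
    show "Pa_feasible k0 ta tb lam Q1 Q2"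
      unfolding Pa_feasible_def by (rule exI[of _ x]) (intro conjI G1 G2 G3 G4)
  qed
qed

end
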